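(* Let $n\geqslant 4$ and let $S$ be an independent set of vertices of the alternating group graph $AG_n$. (1) If $|S|=3$, then $|N(S)|\geqslant 6n-16$. (2) If $|S|=4$, then $|N(S)|\geqslant 8n-24$.
   Context: For $n\geqslant 3$, permutations $p=p_1\cdots p_n$ of $\{1,\dots,n\}$ are written as words; $\mathcal A_n$ is the set of even permutations. For $3\leqslant i\leqslant n$, $p\,\mathrm{g}_i^+$ is obtained from $p$ by placing $p_i,p_1,p_2$ at positions $1,2,i$ respectively (others unchanged), and $p\,\mathrm{g}_i^-$ by placing $p_2,p_i,p_1$ at positions $1,2,i$. $AG_n$ has vertex set $\mathcal A_n$, with $p,q$ adjacent iff $q\in\{p\mathrm{g}_i^+,p\mathrm{g}_i^-\}$ for some $i\in\{3,\dots,n\}$. For a vertex set $S$, $N(S)$ is the set of vertices not in $S$ adjacent to at least one vertex of $S$. *)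

theory Defs
  imports "HOL-Combinatorics.Permutations"
begin

text \<open>A permutation p of {1..n} is represented as a function p :: nat => nat with
  p permutes {1..n}; its word is p 1 p 2 ... p n (so p_i = p i).\<close>

definition alt_perms :: "nat \<Rightarrow> (nat \<Rightarrow> nat) set" where
  "alt_perms n = {p. p permutes {1..n} \<and> evenperm p}"

definition gplus :: "nat \<Rightarrow> (nat \<Rightarrow> nat) \<Rightarrow> (nat \<Rightarrow> nat)" where
  "gplus i p = (\<lambda>k. if k = 1 then p i else if k = 2 then p 1 else if k = i then p 2 else p k)"

definition gminus :: "nat \<Rightarrow> (nat \<Rightarrow> nat) \<Rightarrow> (nat \<Rightarrow> nat)" where
  "gminus i p = (\<lambda>k. if k = 1 then p 2 else if k = 2 then p i else if k = i then p 1 else p k)"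

definition AG_adj :: "nat \<Rightarrow> (nat \<Rightarrow> nat) \<Rightarrow> (nat \<Rightarrow> nat) \<Rightarrow> bool" where
  "AG_adj n p q \<longleftrightarrow> p \<in> alt_perms n \<and> q \<in> alt_perms n \<and>
     (\<exists>i\<in>{3..n}. q = gplus i p \<or> q = gminus i p)"

definition AG_indep :: "nat \<Rightarrow> (nat \<Rightarrow> nat) set \<Rightarrow> bool" where
  "AG_indep n S \<longleftrightarrow> S \<subseteq> alt_perms n \<and> (\<forall>p\<in>S. \<forall>q\<in>S. \<not> AG_adj n p q)"

definition AG_nbhd :: "nat \<Rightarrow> (nat \<Rightarrow> nat) set \<Rightarrow> (nat \<Rightarrow> nat) set" where
  "AG_nbhd n S = {q \<in> alt_perms n. q \<notin> S \<and> (\<exists>p\<in>S. AG_adj n p q)}"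

end

theory Submission
  imports Defs
begin


definition agr :: "(nat \<Rightarrow> nat) \<Rightarrow> (nat \<Rightarrow> nat) \<Rightarrow> nat set \<Rightarrow> bool" where
  "agr f g A \<longleftrightarrow> (\<forall>k. k \<notin> A \<longrightarrow> f k = g k)"

lemma alt_inj: "p \<in> alt_perms n \<Longrightarrow> inj p"
  unfolding alt_perms_def using permutes_inj by blast

lemma alt_surj: "p \<in> alt_perms n \<Longrightarrow> surj p"
  unfolding alt_perms_def using permutes_surj by blast

lemma alt_perm: "p \<in> alt_perms n \<Longrightarrow> permutation p"
  unfolding alt_perms_def using permutes_imp_permutation by blast

lemma gplus_eq: "gplus i p = p \<circ> Transposition.transpose 1 i \<circ> Transposition.transpose 2 i"
  if "i \<ge> 3" using that by (auto simp: gplus_def transpose_def fun_eq_iff)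

lemma gminus_eq: "gminus i p = p \<circ> Transposition.transpose 2 i \<circ> Transposition.transpose 1 i"
  if "i \<ge> 3" using that by (auto simp: gminus_def transpose_def fun_eq_iff)

lemma gplus_alt: "p \<in> alt_perms n \<Longrightarrow> i \<in> {3..n} \<Longrightarrow> gplus i p \<in> alt_perms n"
proof -
  assume p: "p \<in> alt_perms n" and i: "i \<in> {3..n}"
  have t1: "Transposition.transpose 1 i permutes {1..n}" using i by (intro permutes_swap_id) auto
  have t2: "Transposition.transpose 2 i permutes {1..n}" using i by (intro permutes_swap_id) auto
  have pp: "p permutes {1..n}" "evenperm p" using p by (auto simp: alt_perms_def)
  have "gplus i p permutes {1..n}" using i gplus_eq[of i p] t1 t2 pp
    by (metis atLeastAtMost_iff comp_assoc permutes_compose)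
  moreover have "evenperm (gplus i p)"
  proof -
    have e: "gplus i p = p \<circ> (Transposition.transpose 1 i \<circ> Transposition.transpose 2 i)"
      using i gplus_eq[of i p] by (simp add: o_assoc)
    have "evenperm (Transposition.transpose 1 i \<circ> Transposition.transpose 2 i)"
      using i by (simp add: evenperm_comp permutation_swap_id evenperm_swap)
    then show ?thesis unfolding e using pp p
      by (simp add: evenperm_comp permutation_compose permutation_swap_id alt_perm)
  qed
  ultimately show ?thesis by (simp add: alt_perms_def)
qed

lemma gminus_alt: "p \<in> alt_perms n \<Longrightarrow> i \<in> {3..n} \<Longrightarrow> gminus i p \<in> alt_perms n"
proof -
  assume p: "p \<in> alt_perms n" and i: "i \<in> {3..n}"
  have t1: "Transposition.transpose 1 i permutes {1..n}" using i by (intro permutes_swap_id) auto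
  have t2: "Transposition.transpose 2 i permutes {1..n}" using i by (intro permutes_swap_id) auto
  have pp: "p permutes {1..n}" "evenperm p" using p by (auto simp: alt_perms_def)
  have "gminus i p permutes {1..n}" using i gminus_eq[of i p] t1 t2 pp
    by (metis atLeastAtMost_iff comp_assoc permutes_compose)
  moreover have "evenperm (gminus i p)"
  proof -
    have e: "gminus i p = p \<circ> (Transposition.transpose 2 i \<circ> Transposition.transpose 1 i)"
      using i gminus_eq[of i p] by (simp add: o_assoc)
    have "evenperm (Transposition.transpose 2 i \<circ> Transposition.transpose 1 i)"
      using i by (simp add: evenperm_comp permutation_swap_id evenperm_swap)
    then show ?thesis unfolding e using pp p
      by (simp add: evenperm_comp permutation_compose permutation_swap_id alt_perm)
  qed
  ultimately show ?thesis by (simp add: alt_perms_def)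
qed


lemma odd_case:
  assumes "p \<in> alt_perms n" "r \<in> alt_perms n" "a \<noteq> b" "r = p \<circ> Transposition.transpose a b"
  shows False
proof -
  have "evenperm r = (evenperm p = evenperm (Transposition.transpose a b))"
    using assms by (simp add: evenperm_comp alt_perm permutation_swap_id)
  then show False using assms by (simp add: evenperm_swap alt_perms_def)
qed

lemma K:
  assumes p: "p \<in> alt_perms n" and r: "r \<in> alt_perms n" and i: "i \<in> {3..n}"
    and ag: "agr r p {1,2,i}" and ne: "r \<noteq> p"
  shows "r = gplus i p \<or> r = gminus i p"
proof -
  have ir: "inj r" and ip: "inj p" and sp: "surj p" using p r alt_inj alt_surj by auto
  have agk: "\<And>k. k \<noteq> 1 \<Longrightarrow> k \<noteq> 2 \<Longrightarrow> k \<noteq> i \<Longrightarrow> r k = p k" using ag by (auto simp: agr_def)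
  have vals: "r k \<in> {p 1, p 2, p i}" if "k \<in> {1,2,i}" for k
  proof -
    obtain m where m: "r k = p m" using sp by (metis surjD)
    have "m \<in> {1,2,i}"
    proof (rule ccontr)
      assume "m \<notin> {1,2,i}"
      then have "r m = p m" using agk by auto
      then have "m = k" using m ir by (metis injD)
      then show False using \<open>m \<notin> {1,2,i}\<close> that by simp
    qed
    then show ?thesis using m by auto
  qed
  have i3: "i \<ge> 3" using i by auto
  have d12: "r 1 \<noteq> r 2" "r 1 \<noteq> r i" "r 2 \<noteq> r i" using i3 by (simp_all add: inj_eq[OF ir])
  have pd: "p 1 \<noteq> p 2" "p 1 \<noteq> p i" "p 2 \<noteq> p i" using i3 by (simp_all add: inj_eq[OF ip])
  have v1: "r 1 \<in> {p 1, p 2, p i}" and v2: "r 2 \<in> {p 1, p 2, p i}" and v3: "r i \<in> {p 1, p 2, p i}"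
    using vals by auto
  show ?thesis
  proof -
    { assume a: "r 1 = p 1" "r 2 = p 2"
      then have "r i = p i" using v3 d12 by auto
      then have "r = p" using a agk
        by (intro ext) (case_tac "x = 1"; case_tac "x = 2"; case_tac "x = i"; simp)
      then have False using ne by simp }
    moreover
    { assume a: "r 1 = p 1" "r 2 = p i"
      then have "r i = p 2" using v3 d12 by auto
      then have "r = p \<circ> Transposition.transpose 2 i" using a agk i3
        by (intro ext) (case_tac "x = 1"; case_tac "x = 2"; case_tac "x = i"; simp add: transpose_def)
      then have False using odd_case[OF p r, of 2 i] i3 by simp }
    moreover
    { assume a: "r 1 = p 2" "r 2 = p 1"
      then have "r i = p i" using v3 d12 by auto
      then have "r = p \<circ> Transposition.transpose 1 2" using a agk i3
        by (intro ext) (case_tac "x = 1"; case_tac "x = 2"; case_tac "x = i"; simp add: transpose_def)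
      then have False using odd_case[OF p r, of 1 2] by simp }
    moreover
    { assume a: "r 1 = p i" "r 2 = p 2"
      then have "r i = p 1" using v3 d12 by auto
      then have "r = p \<circ> Transposition.transpose 1 i" using a agk i3
        by (intro ext) (case_tac "x = 1"; case_tac "x = 2"; case_tac "x = i"; simp add: transpose_def)
      then have False using odd_case[OF p r, of 1 i] i3 by simp }
    moreover
    { assume a: "r 1 = p 2" "r 2 = p i"
      then have "r i = p 1" using v3 d12 by auto
      then have "r = gminus i p" using a agk i3
        by (intro ext) (case_tac "x = 1"; case_tac "x = 2"; case_tac "x = i"; simp add: gminus_def) }
    moreover
    { assume a: "r 1 = p i" "r 2 = p 1"
      then have "r i = p 2" using v3 d12 by auto
      then have "r = gplus i p" using a agk i3
        by (intro ext) (case_tac "x = 1"; case_tac "x = 2"; case_tac "x = i"; simp add: gplus_def) }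
    ultimately show ?thesis using v1 v2 d12 by auto
  qed
qed



lemma L2core:
  fixes p q s w :: "nat \<Rightarrow> nat"
  assumes ip: "inj p" and iq: "inj q" and ins: "inj s"
    and ge: "i \<ge> 3" "j \<ge> 3" "k \<ge> 3" "l \<ge> 3" "u \<ge> 3" "v \<ge> 3"
    and ne: "i \<noteq> j" "k \<noteq> l" "u \<noteq> v"
    and pq: "\<And>m. m \<notin> {1,2,i,j} \<Longrightarrow> p m = q m" and qi: "q i \<in> {p 1, p 2}" and qj: "q j \<in> {p 1, p 2}"
    and ps: "\<And>m. m \<notin> {1,2,k,l} \<Longrightarrow> p m = s m" and sk: "s k \<in> {p 1, p 2}" and sl: "s l \<in> {p 1, p 2}"
    and wq: "\<And>m. m \<notin> {1,2,u} \<Longrightarrow> w m = q m" and ws: "\<And>m. m \<notin> {1,2,v} \<Longrightarrow> w m = s m"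
    and wu: "w u \<in> {q 1, q 2}" and wv: "w v \<in> {s 1, s 2}"
  shows "\<exists>c\<in>{i,j}. (\<forall>m. m \<notin> {1,2,c} \<longrightarrow> w m = p m) \<and> w c \<noteq> p c"
proof -
  have P: "p a = p b \<longleftrightarrow> a = b" for a b using ip by (simp add: inj_eq)
  have Q: "q a = q b \<longleftrightarrow> a = b" for a b using iq by (simp add: inj_eq)
  have S: "s a = s b \<longleftrightarrow> a = b" for a b using ins by (simp add: inj_eq)
  have su: "w u = s u" using ws ge ne by auto
  have qv: "w v = q v" using wq ge ne by auto
  have squ: "s u \<noteq> q u" using su wu ge Q by auto
  have sqv: "q v \<noteq> s v" using qv wv ge S by auto
  have qs: "q m = s m" if "m \<notin> {1,2,u,v}" for m using wq ws that by force
  have qij: "q i \<noteq> q j" using Q ne by simp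
  have skl: "s k \<noteq> s l" using S ne by simp
  have p12: "p 1 \<noteq> p 2" using P by simp
  have p12q: "p 1 \<in> {q i, q j}" "p 2 \<in> {q i, q j}" using qi qj qij p12 by auto
  have p12s: "p 1 \<in> {s k, s l}" "p 2 \<in> {s k, s l}" using sk sl skl p12 by auto
  have uY: "u \<notin> {k,l}"
  proof
    assume "u \<in> {k,l}"
    then have "s u \<in> {p 1, p 2}" using sk sl by auto
    then have "s u \<in> {q i, q j}" using p12q by auto
    moreover have "s u \<in> {q 1, q 2}" using su wu by simp
    ultimately show False using Q ge by auto
  qed
  have uX: "u \<in> {i,j}"
  proof (rule ccontr)
    assume "u \<notin> {i,j}"
    then have "q u = p u" using pq ge by auto
    moreover have "s u = p u" using ps uY ge by auto
    ultimately show False using squ by simp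
  qed
  have vX: "v \<notin> {i,j}"
  proof
    assume "v \<in> {i,j}"
    then have "q v \<in> {p 1, p 2}" using qi qj by auto
    then have "q v \<in> {s k, s l}" using p12s by auto
    moreover have "q v \<in> {s 1, s 2}" using qv wv by simp
    ultimately show False using S ge by auto
  qed
  define c where "c = (if u = i then j else i)"
  have cij: "c \<in> {i,j}" "c \<noteq> u" and ijuc: "{i,j} = {u,c}" using uX ne by (auto simp: c_def)
  have c3: "c \<ge> 3" using cij ge by auto
  have qc: "q c \<in> {p 1, p 2}" using cij qi qj by auto
  have cY: "c \<in> {k,l}"
  proof (rule ccontr)
    assume "c \<notin> {k,l}"
    then have "s c = p c" using ps c3 by auto
    moreover have "q c \<noteq> p c" using qc P c3 by auto
    ultimately have "q c \<noteq> s c" by simp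
    then have "c \<in> {1,2,u,v}" using qs by blast
    then show False using cij vX c3 by auto
  qed
  have agr: "w m = p m" if "m \<notin> {1,2,c}" for m
  proof -
    consider "m = u" | "m = v" | "m \<noteq> u" "m \<noteq> v" by blast
    then show ?thesis
    proof cases
      case 1 then show ?thesis using su ps uY ge by auto
    next
      case 2 then show ?thesis using qv pq vX ge by auto
    next
      case 3
      then have "w m = q m" using wq that by auto
      moreover have "m \<notin> {1,2,i,j}" using that 3 ijuc by auto
      ultimately show ?thesis using pq by auto
    qed
  qed
  have "w c = q c" using wq cij c3 by auto
  then have "w c \<noteq> p c" using qc P c3 by auto
  then show ?thesis using agr cij by blast
qed



lemma gplus_agr: "agr (gplus i p) p {1,2,i}" by (auto simp: agr_def gplus_def)
lemma gminus_agr: "agr (gminus i p) p {1,2,i}" by (auto simp: agr_def gminus_def)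

lemma gplus_ne: "inj p \<Longrightarrow> i \<ge> 3 \<Longrightarrow> gplus i p \<noteq> p"
  by (metis gplus_def injD numeral_le_one_iff semiring_norm(70) fun_eq_iff)
lemma gminus_ne: "inj p \<Longrightarrow> i \<ge> 3 \<Longrightarrow> gminus i p \<noteq> p"
proof
  assume "inj p" "i \<ge> 3" "gminus i p = p"
  then have "p 2 = p 1" by (metis gminus_def one_neq_zero)
  then show False using \<open>inj p\<close> by (simp add: inj_eq)
qed

lemma adj_iff:
  assumes p: "p \<in> alt_perms n"
  shows "AG_adj n p r \<longleftrightarrow> r \<in> alt_perms n \<and> (\<exists>i\<in>{3..n}. r \<noteq> p \<and> agr r p {1,2,i})"
proof
  assume "AG_adj n p r"
  then obtain i where i: "i \<in> {3..n}" "r = gplus i p \<or> r = gminus i p" and r: "r \<in> alt_perms n"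
    by (auto simp: AG_adj_def)
  then show "r \<in> alt_perms n \<and> (\<exists>i\<in>{3..n}. r \<noteq> p \<and> agr r p {1,2,i})"
    using gplus_ne[OF alt_inj[OF p]] gminus_ne[OF alt_inj[OF p]] gplus_agr[of i p] gminus_agr[of i p] by auto
next
  assume "r \<in> alt_perms n \<and> (\<exists>i\<in>{3..n}. r \<noteq> p \<and> agr r p {1,2,i})"
  then obtain i where "r \<in> alt_perms n" "i \<in> {3..n}" "r \<noteq> p" "agr r p {1,2,i}" by blast
  then show "AG_adj n p r" using K[OF p, of r i] p unfolding AG_adj_def by blast
qed

lemma Kval:
  assumes "p \<in> alt_perms n" "r \<in> alt_perms n" "i \<in> {3..n}" "agr r p {1,2,i}" "r \<noteq> p"
  shows "r i \<in> {p 1, p 2}"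
  using K[OF assms] assms(3) by (auto simp: gplus_def gminus_def)

lemma UQ:
  assumes p: "p \<in> alt_perms n" and r: "r \<in> alt_perms n" and r': "r' \<in> alt_perms n" and i: "i \<in> {3..n}"
    and "agr r p {1,2,i}" "agr r' p {1,2,i}" "r \<noteq> p" "r' \<noteq> p" "r i = r' i"
  shows "r = r'"
proof -
  have "p 1 \<noteq> p 2" using alt_inj[OF p] by (simp add: inj_eq)
  moreover have "gplus i p i = p 2" "gminus i p i = p 1" using i by (auto simp: gplus_def gminus_def)
  ultimately show ?thesis using K[OF p r i] K[OF p r' i] assms by metis
qed

lemma CN:
  assumes p: "p \<in> alt_perms n" and q: "q \<in> alt_perms n" and pq: "p \<noteq> q" and na: "\<not> AG_adj n p q"
    and rp: "AG_adj n p r" and rq: "AG_adj n q r"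
  shows "\<exists>i\<in>{3..n}. \<exists>j\<in>{3..n}. i \<noteq> j \<and> agr r p {1,2,i} \<and> agr r q {1,2,j} \<and> r \<in> alt_perms n \<and> r \<noteq> p \<and> r \<noteq> q
     \<and> (\<forall>m. m \<notin> {1,2,i,j} \<longrightarrow> p m = q m) \<and> r i = q i \<and> r j = p j \<and> q i \<in> {p 1, p 2} \<and> p j \<in> {q 1, q 2}
     \<and> p i \<noteq> q i \<and> p j \<noteq> q j"
proof -
  obtain i where i: "i \<in> {3..n}" "r \<noteq> p" "agr r p {1,2,i}" and r: "r \<in> alt_perms n"
    using rp adj_iff[OF p] by blast
  obtain j where j: "j \<in> {3..n}" "r \<noteq> q" "agr r q {1,2,j}"
    using rq adj_iff[OF q] by blast
  have ij: "i \<noteq> j"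
  proof
    assume "i = j"
    then have "agr q p {1,2,i}" using i j by (auto simp: agr_def)
    then have "AG_adj n p q" using adj_iff[OF p] q i pq by auto
    then show False using na by simp
  qed
  have agpq: "\<forall>m. m \<notin> {1,2,i,j} \<longrightarrow> p m = q m" using i j by (auto simp: agr_def)
  have ri: "r i = q i" using j i ij by (auto simp: agr_def)
  have rj: "r j = p j" using j i ij by (auto simp: agr_def)
  have v1: "q i \<in> {p 1, p 2}" using Kval[OF p r i(1) i(3) i(2)] ri by simp
  have v2: "p j \<in> {q 1, q 2}" using Kval[OF q r j(1) j(3) j(2)] rj by simp
  have "p i \<notin> {p 1, p 2}" "q j \<notin> {q 1, q 2}" using i j alt_inj[OF p] alt_inj[OF q] by (auto simp: inj_eq)
  then have "p i \<noteq> q i" "p j \<noteq> q j" using v1 v2 by auto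
  then show ?thesis using i j r ij agpq ri rj v1 v2 by blast
qed

definition Nb :: "nat \<Rightarrow> (nat \<Rightarrow> nat) \<Rightarrow> (nat \<Rightarrow> nat) set" where
  "Nb n p = {r. AG_adj n p r}"

lemma Nb_eq: "p \<in> alt_perms n \<Longrightarrow> Nb n p = (\<lambda>i. gplus i p) ` {3..n} \<union> (\<lambda>i. gminus i p) ` {3..n}"
  unfolding Nb_def AG_adj_def using gplus_alt gminus_alt by auto

lemma Nb_fin: "p \<in> alt_perms n \<Longrightarrow> finite (Nb n p)"
  by (simp add: Nb_eq)

lemma Nb_card: assumes p: "p \<in> alt_perms n" shows "card (Nb n p) = 2 * (n - 2)"
proof -
  have ip: "inj p" using alt_inj[OF p] .
  have i1: "inj_on (\<lambda>i. gplus i p) {3..n}"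
    by (rule inj_onI) (metis gplus_def fun_eq_iff injD[OF ip])
  have i2: "inj_on (\<lambda>i. gminus i p) {3..n}"
  proof (rule inj_onI)
    fix x y assume "x \<in> {3..n}" "y \<in> {3..n}" "gminus x p = gminus y p"
    then have "gminus x p 2 = gminus y p 2" by simp
    then have "p x = p y" by (simp add: gminus_def)
    then show "x = y" using ip by (simp add: inj_eq)
  qed
  have d: "(\<lambda>i. gplus i p) ` {3..n} \<inter> (\<lambda>i. gminus i p) ` {3..n} = {}"
  proof (rule ccontr)
    assume "\<not> ?thesis"
    then obtain x y where "x \<in> {3..n}" "y \<in> {3..n}" "gplus x p = gminus y p" by blast
    then have "gplus x p 1 = gminus y p 1" by simp
    then have "p x = p 2" by (simp add: gplus_def gminus_def)
    then show False using ip \<open>x \<in> {3..n}\<close> by (simp add: inj_eq)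
  qed
  have "card (Nb n p) = card ((\<lambda>i. gplus i p) ` {3..n}) + card ((\<lambda>i. gminus i p) ` {3..n})"
    unfolding Nb_eq[OF p] by (rule card_Un_disjoint) (use d in auto)
  also have "\<dots> = 2 * (n - 2)" using card_image[OF i1] card_image[OF i2] by simp
  finally show ?thesis .
qed



lemma three_elems:
  assumes "finite C" "card C > 2"
  shows "\<exists>a\<in>C. \<exists>b\<in>C. \<exists>c\<in>C. a \<noteq> b \<and> a \<noteq> c \<and> b \<noteq> c"
proof -
  obtain a where a: "a \<in> C" using assms by fastforce
  have "card (C - {a}) > 1" using assms a by simp
  then have "C - {a} \<noteq> {}" by (metis card.empty not_less_zero less_zeroE zero_less_one less_trans)
  then obtain b where b: "b \<in> C - {a}" by blast
  have "card (C - {a} - {b}) > 0" using assms a b by (simp add: card_Diff_singleton_if)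
  then have "C - {a} - {b} \<noteq> {}" by (metis card.empty less_irrefl)
  then obtain c where c: "c \<in> C - {a} - {b}" by blast
  show ?thesis using a b c by blast
qed

lemma L1:
  assumes p: "p \<in> alt_perms n" and q: "q \<in> alt_perms n" and pq: "p \<noteq> q" and na: "\<not> AG_adj n p q"
  shows "card (Nb n p \<inter> Nb n q) \<le> 2"
proof (rule ccontr)
  assume "\<not> ?thesis"
  then have "card (Nb n p \<inter> Nb n q) > 2" by simp
  then obtain r1 r2 r3 where r: "r1 \<in> Nb n p \<inter> Nb n q" "r2 \<in> Nb n p \<inter> Nb n q" "r3 \<in> Nb n p \<inter> Nb n q"
     and d: "r1 \<noteq> r2" "r1 \<noteq> r3" "r2 \<noteq> r3"
    using three_elems[of "Nb n p \<inter> Nb n q"] Nb_fin[OF p] by blast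
  obtain i1 j1 where c1: "i1\<in>{3..n}" "j1\<in>{3..n}" "i1 \<noteq> j1" "agr r1 p {1,2,i1}" "r1 \<in> alt_perms n" "r1 \<noteq> p"
     "\<forall>m. m \<notin> {1,2,i1,j1} \<longrightarrow> p m = q m" "r1 i1 = q i1" "p i1 \<noteq> q i1"
    using CN[OF p q pq na, of r1] r(1) unfolding Nb_def by blast
  obtain i2 j2 where c2: "i2\<in>{3..n}" "agr r2 p {1,2,i2}" "r2 \<in> alt_perms n" "r2 \<noteq> p"
     "r2 i2 = q i2" "p i2 \<noteq> q i2"
    using CN[OF p q pq na, of r2] r(2) unfolding Nb_def by blast
  obtain i3 j3 where c3: "i3\<in>{3..n}" "agr r3 p {1,2,i3}" "r3 \<in> alt_perms n" "r3 \<noteq> p"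
     "r3 i3 = q i3" "p i3 \<noteq> q i3"
    using CN[OF p q pq na, of r3] r(3) unfolding Nb_def by blast
  have "i2 \<in> {i1, j1}" "i3 \<in> {i1,j1}" using c1(7) c2 c3 by force+
  moreover have "i1 \<noteq> i2" using UQ[OF p c1(5) c2(3) c1(1) c1(4) _ c1(6) c2(4)] c1 c2 d by auto
  moreover have "i1 \<noteq> i3" using UQ[OF p c1(5) c3(3) c1(1) c1(4) _ c1(6) c3(4)] c1 c3 d by auto
  moreover have "i2 \<noteq> i3" using UQ[OF p c2(3) c3(3) c2(1) c2(2) _ c2(4) c3(4)] c2 c3 d by auto
  ultimately show False by auto
qed

lemma L2a:
  assumes p: "p \<in> alt_perms n" and q: "q \<in> alt_perms n" and pq: "p \<noteq> q" and na: "\<not> AG_adj n p q"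
    and c2: "card (Nb n p \<inter> Nb n q) = 2"
  shows "\<exists>i\<in>{3..n}. \<exists>j\<in>{3..n}. i \<noteq> j \<and> (\<forall>m. m \<notin> {1,2,i,j} \<longrightarrow> p m = q m) \<and> q i \<in> {p 1, p 2} \<and> q j \<in> {p 1, p 2}"
proof -
  obtain r r' where r: "r \<in> Nb n p \<inter> Nb n q" "r' \<in> Nb n p \<inter> Nb n q" "r \<noteq> r'"
    using c2 by (auto simp: card_2_iff)
  obtain i j where c1: "i\<in>{3..n}" "j\<in>{3..n}" "i \<noteq> j" "agr r p {1,2,i}" "r \<in> alt_perms n" "r \<noteq> p"
     "\<forall>m. m \<notin> {1,2,i,j} \<longrightarrow> p m = q m" "r i = q i" "p i \<noteq> q i" "q i \<in> {p 1, p 2}"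
    using CN[OF p q pq na, of r] r(1) unfolding Nb_def by blast
  obtain i' j' where c2: "i'\<in>{3..n}" "j'\<in>{3..n}" "i' \<noteq> j'" "agr r' p {1,2,i'}" "r' \<in> alt_perms n" "r' \<noteq> p"
     "r' i' = q i'" "p i' \<noteq> q i'" "q i' \<in> {p 1, p 2}" "p j' \<noteq> q j'"
    using CN[OF p q pq na, of r'] r(2) unfolding Nb_def by blast
  have "i' \<in> {i, j}" "j' \<in> {i,j}" using c1(7) c2 by force+
  moreover have "i \<noteq> i'" using UQ[OF p c1(5) c2(5) c1(1) c1(4) _ c1(6) c2(6)] c1 c2 r by auto
  ultimately have "i' = j" by auto
  then show ?thesis using c1 c2 by blast
qed

lemma L2:
  assumes p: "p \<in> alt_perms n" and q: "q \<in> alt_perms n" and s: "s \<in> alt_perms n"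
    and pq: "p \<noteq> q" and ps: "p \<noteq> s" and qs: "q \<noteq> s"
    and na1: "\<not> AG_adj n p q" and na2: "\<not> AG_adj n p s" and na3: "\<not> AG_adj n q s"
    and c1: "card (Nb n p \<inter> Nb n q) = 2" and c2: "card (Nb n p \<inter> Nb n s) = 2"
  shows "Nb n q \<inter> Nb n s \<subseteq> Nb n p"
proof
  fix w assume w: "w \<in> Nb n q \<inter> Nb n s"
  obtain i j where A: "i\<in>{3..n}" "j\<in>{3..n}" "i \<noteq> j" "\<forall>m. m \<notin> {1,2,i,j} \<longrightarrow> p m = q m"
      "q i \<in> {p 1, p 2}" "q j \<in> {p 1, p 2}" using L2a[OF p q pq na1 c1] by blast
  obtain k l where B: "k\<in>{3..n}" "l\<in>{3..n}" "k \<noteq> l" "\<forall>m. m \<notin> {1,2,k,l} \<longrightarrow> p m = s m"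
      "s k \<in> {p 1, p 2}" "s l \<in> {p 1, p 2}" using L2a[OF p s ps na2 c2] by blast
  obtain u v where C: "u\<in>{3..n}" "v\<in>{3..n}" "u \<noteq> v" "agr w q {1,2,u}" "agr w s {1,2,v}"
      "w \<in> alt_perms n" "w u = s u" "w v = q v" "s u \<in> {q 1, q 2}" "q v \<in> {s 1, s 2}"
    using CN[OF q s qs na3, of w] w unfolding Nb_def by blast
  have wq: "\<And>m. m \<notin> {1,2,u} \<Longrightarrow> w m = q m" using C(4) by (simp add: agr_def)
  have ws: "\<And>m. m \<notin> {1,2,v} \<Longrightarrow> w m = s m" using C(5) by (simp add: agr_def)
  have pq': "\<And>m. m \<notin> {1,2,i,j} \<Longrightarrow> p m = q m" using A(4) by blast
  have ps': "\<And>m. m \<notin> {1,2,k,l} \<Longrightarrow> p m = s m" using B(4) by blast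
  have wu: "w u \<in> {q 1, q 2}" using C(7) C(9) by simp
  have wv: "w v \<in> {s 1, s 2}" using C(8) C(10) by simp
  have ge: "i \<ge> 3" "j \<ge> 3" "k \<ge> 3" "l \<ge> 3" "u \<ge> 3" "v \<ge> 3" using A B C by auto
  have "\<exists>c\<in>{i,j}. (\<forall>m. m \<notin> {1,2,c} \<longrightarrow> w m = p m) \<and> w c \<noteq> p c"
    by (rule L2core[OF alt_inj[OF p] alt_inj[OF q] alt_inj[OF s] ge A(3) B(3) C(3) pq' A(5) A(6) ps' B(5) B(6) wq ws wu wv])
  then obtain c where "c \<in> {i,j}" "agr w p {1,2,c}" "w \<noteq> p" by (auto simp: agr_def)
  moreover have "c \<in> {3..n}" using \<open>c \<in> {i,j}\<close> A by auto
  ultimately show "w \<in> Nb n p" unfolding Nb_def using adj_iff[OF p] C(6) by blast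
qed



lemma card_ind:
  assumes "finite U" "X \<subseteq> U"
  shows "card X = (\<Sum>x\<in>U. if x \<in> X then 1 else 0::nat)"
proof -
  have "(\<Sum>x\<in>U. if x \<in> X then 1 else 0::nat) = card (U \<inter> X)"
    by (simp add: sum.If_cases assms(1))
  then show ?thesis using assms by (simp add: Int_absorb1)
qed

lemma U3:
  fixes A B C :: "'a set"
  assumes "finite A" "finite B" "finite C"
  shows "card (A \<union> B \<union> C) + card (A \<inter> B) + card (A \<inter> C) + card (B \<inter> C)
       = card A + card B + card C + card (A \<inter> B \<inter> C)"
proof -
  define U where "U = A \<union> B \<union> C"
  have f: "finite U" using assms by (simp add: U_def)
  define ind where "ind (X::'a set) x = (if x \<in> X then 1 else 0::nat)" for X x
  have ci: "card X = (\<Sum>x\<in>U. ind X x)" if "X \<subseteq> U" for X :: "'a set"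
    using card_ind[OF f that] by (simp add: ind_def)
  have "(\<Sum>x\<in>U. ind (A \<union> B \<union> C) x + ind (A \<inter> B) x + ind (A \<inter> C) x + ind (B \<inter> C) x)
      = (\<Sum>x\<in>U. ind A x + ind B x + ind C x + ind (A \<inter> B \<inter> C) x)"
    by (rule sum.cong) (auto simp: ind_def U_def)
  then show ?thesis
    by (simp add: sum.distrib ci U_def Int_lower1 le_supI1 le_supI2 inf.coboundedI1)
qed

lemma U4:
  fixes A B C D :: "'a set"
  assumes "finite A" "finite B" "finite C" "finite D"
  shows "card (A \<union> B \<union> C) + card (A \<union> B \<union> D) + card (A \<union> C \<union> D) + card (B \<union> C \<union> D)
       \<le> 2 * card (A \<union> B \<union> C \<union> D) + card A + card B + card C + card D"
proof -
  define U where "U = A \<union> B \<union> C \<union> D"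
  have f: "finite U" using assms by (simp add: U_def)
  define ind where "ind (X::'a set) x = (if x \<in> X then 1 else 0::nat)" for X x
  have ci: "card X = (\<Sum>x\<in>U. ind X x)" if "X \<subseteq> U" for X :: "'a set"
    using card_ind[OF f that] by (simp add: ind_def)
  have "(\<Sum>x\<in>U. ind (A \<union> B \<union> C) x + ind (A \<union> B \<union> D) x + ind (A \<union> C \<union> D) x + ind (B \<union> C \<union> D) x)
      \<le> (\<Sum>x\<in>U. 2 * ind U x + ind A x + ind B x + ind C x + ind D x)"
    by (rule sum_mono) (auto simp: ind_def U_def)
  moreover have "(\<Sum>x\<in>U. 2 * ind U x + ind A x + ind B x + ind C x + ind D x)
     = 2 * card U + card A + card B + card C + card D"
    by (simp add: sum.distrib ci U_def sum_distrib_left[symmetric] le_supI1 le_supI2)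
  moreover have "(\<Sum>x\<in>U. ind (A \<union> B \<union> C) x + ind (A \<union> B \<union> D) x + ind (A \<union> C \<union> D) x + ind (B \<union> C \<union> D) x)
     = card (A \<union> B \<union> C) + card (A \<union> B \<union> D) + card (A \<union> C \<union> D) + card (B \<union> C \<union> D)"
    by (simp add: sum.distrib ci U_def le_supI1 le_supI2)
  ultimately show ?thesis by (simp add: U_def)
qed



lemma T3:
  assumes a: "a \<in> alt_perms n" and b: "b \<in> alt_perms n" and c: "c \<in> alt_perms n"
    and d: "a \<noteq> b" "a \<noteq> c" "b \<noteq> c"
    and na: "\<forall>x\<in>{a,b,c}. \<forall>y\<in>{a,b,c}. \<not> AG_adj n x y"
  shows "card (Nb n a \<union> Nb n b \<union> Nb n c) + 4 \<ge> 6 * (n - 2)"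
proof -
  have ca: "card (Nb n a) = 2 * (n - 2)" "card (Nb n b) = 2 * (n - 2)" "card (Nb n c) = 2 * (n - 2)"
    using Nb_card a b c by auto
  have E: "card (Nb n a \<union> Nb n b \<union> Nb n c) + card (Nb n a \<inter> Nb n b) + card (Nb n a \<inter> Nb n c) + card (Nb n b \<inter> Nb n c)
       = card (Nb n a) + card (Nb n b) + card (Nb n c) + card (Nb n a \<inter> Nb n b \<inter> Nb n c)"
    by (rule U3[OF Nb_fin[OF a] Nb_fin[OF b] Nb_fin[OF c]])
  have x: "card (Nb n a \<inter> Nb n b) \<le> 2" using L1[OF a b d(1)] na by simp
  have y: "card (Nb n a \<inter> Nb n c) \<le> 2" using L1[OF a c d(2)] na by simp
  have z: "card (Nb n b \<inter> Nb n c) \<le> 2" using L1[OF b c d(3)] na by simp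
  have ab: "Nb n a \<inter> Nb n b = Nb n b \<inter> Nb n a" "Nb n a \<inter> Nb n c = Nb n c \<inter> Nb n a"
    "Nb n b \<inter> Nb n c = Nb n c \<inter> Nb n b" by auto
  have c1: "Nb n a \<inter> Nb n b \<inter> Nb n c = Nb n b \<inter> Nb n c"
    if "card (Nb n a \<inter> Nb n b) = 2" "card (Nb n a \<inter> Nb n c) = 2"
    using L2[OF a b c d, of] na that by auto
  have c2: "Nb n a \<inter> Nb n b \<inter> Nb n c = Nb n a \<inter> Nb n c"
    if "card (Nb n a \<inter> Nb n b) = 2" "card (Nb n b \<inter> Nb n c) = 2"
    using L2[OF b a c d(1)[symmetric] d(3) d(2)] na that ab by auto
  have c3: "Nb n a \<inter> Nb n b \<inter> Nb n c = Nb n a \<inter> Nb n b"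
    if "card (Nb n a \<inter> Nb n c) = 2" "card (Nb n b \<inter> Nb n c) = 2"
    using L2[OF c a b d(2)[symmetric] d(3)[symmetric] d(1)] na that ab by auto
  show ?thesis
  proof (cases "card (Nb n a \<inter> Nb n b) = 2 \<and> card (Nb n a \<inter> Nb n c) = 2")
    case True then show ?thesis using E c1 ca by simp
  next
    case F1: False
    show ?thesis
    proof (cases "card (Nb n a \<inter> Nb n b) = 2 \<and> card (Nb n b \<inter> Nb n c) = 2")
      case True then show ?thesis using E c2 ca by simp
    next
      case F2: False
      show ?thesis
      proof (cases "card (Nb n a \<inter> Nb n c) = 2 \<and> card (Nb n b \<inter> Nb n c) = 2")
        case True then show ?thesis using E c3 ca by simp
      next
        case F3: False
        then show ?thesis using E ca x y z F1 F2 by linarith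
      qed
    qed
  qed
qed

lemma nbhd_eq:
  assumes "AG_indep n S"
  shows "AG_nbhd n S = (\<Union>p\<in>S. Nb n p)"
  using assms unfolding AG_indep_def AG_nbhd_def Nb_def AG_adj_def by blast

theorem lemma6:
  fixes n :: nat and S :: "(nat \<Rightarrow> nat) set"
  assumes "n \<ge> 4" and "AG_indep n S"
  shows "(card S = 3 \<longrightarrow> card (AG_nbhd n S) \<ge> 6 * n - 16) \<and>
         (card S = 4 \<longrightarrow> card (AG_nbhd n S) \<ge> 8 * n - 24)"
proof (intro conjI impI)
  have Salt: "S \<subseteq> alt_perms n" and na: "\<forall>x\<in>S. \<forall>y\<in>S. \<not> AG_adj n x y"
    using assms(2) by (auto simp: AG_indep_def)
  {
    assume "card S = 3"
    then obtain a b c where S: "S = {a,b,c}" "a \<noteq> b" "b \<noteq> c" "a \<noteq> c" by (auto simp: card_3_iff)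
    have "AG_nbhd n S = Nb n a \<union> Nb n b \<union> Nb n c" using nbhd_eq[OF assms(2)] S by auto
    moreover have "card (Nb n a \<union> Nb n b \<union> Nb n c) + 4 \<ge> 6 * (n - 2)"
      using T3[of a n b c] Salt na S by auto
    ultimately show "card (AG_nbhd n S) \<ge> 6 * n - 16" using assms(1) by simp
  }
  {
    assume "card S = 4"
    then have "card S = Suc 3" by simp
    then obtain a B where B: "S = insert a B" "a \<notin> B" "card B = 3"
      unfolding card_Suc_eq by blast
    then obtain b c d where S: "S = {a,b,c,d}" "b \<noteq> c" "c \<noteq> d" "b \<noteq> d" "a \<noteq> b" "a \<noteq> c" "a \<noteq> d"
      by (auto simp: card_3_iff)
    have al: "a \<in> alt_perms n" "b \<in> alt_perms n" "c \<in> alt_perms n" "d \<in> alt_perms n" using Salt S by auto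
    have NE: "AG_nbhd n S = Nb n a \<union> Nb n b \<union> Nb n c \<union> Nb n d" using nbhd_eq[OF assms(2)] S by auto
    have "card (Nb n a \<union> Nb n b \<union> Nb n c) + 4 \<ge> 6 * (n - 2)"
      using T3[of a n b c] Salt na S by auto
    moreover have "card (Nb n a \<union> Nb n b \<union> Nb n d) + 4 \<ge> 6 * (n - 2)"
      using T3[of a n b d] Salt na S by auto
    moreover have "card (Nb n a \<union> Nb n c \<union> Nb n d) + 4 \<ge> 6 * (n - 2)"
      using T3[of a n c d] Salt na S by auto
    moreover have "card (Nb n b \<union> Nb n c \<union> Nb n d) + 4 \<ge> 6 * (n - 2)"
      using T3[of b n c d] Salt na S by auto
    moreover have "card (Nb n a \<union> Nb n b \<union> Nb n c) + card (Nb n a \<union> Nb n b \<union> Nb n d)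
        + card (Nb n a \<union> Nb n c \<union> Nb n d) + card (Nb n b \<union> Nb n c \<union> Nb n d)
       \<le> 2 * card (Nb n a \<union> Nb n b \<union> Nb n c \<union> Nb n d) + card (Nb n a) + card (Nb n b) + card (Nb n c) + card (Nb n d)"
      by (rule U4[OF Nb_fin[OF al(1)] Nb_fin[OF al(2)] Nb_fin[OF al(3)] Nb_fin[OF al(4)]])
    moreover have "card (Nb n a) = 2 * (n - 2)" "card (Nb n b) = 2 * (n - 2)" "card (Nb n c) = 2 * (n - 2)"
      "card (Nb n d) = 2 * (n - 2)" using Nb_card al by auto
    ultimately have "card (Nb n a \<union> Nb n b \<union> Nb n c \<union> Nb n d) \<ge> 8 * n - 24" using assms(1) by linarith
    then show "card (AG_nbhd n S) \<ge> 8 * n - 24" using NE by simp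
  }
qed

end
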